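(* Let $M>0$, $\Delta>0$, $\theta\ge0$, and let $P\in\mathcal P(\Delta,\theta,M)$ with $u=dP/dP_0-1$. Define $\eta^2_\varrho(P,P_0)=\sum_{k\ge1}\frac{\lambda_k}{\lambda_k+\varrho^2}\big[\mathbb E_P\varphi_k(X)\big]^2$. (a) If $\theta=0$ and $0<\varrho\le\sqrt{\Delta/(2M^2)}$, then $\eta^2_\varrho(P,P_0)\ge\frac12\|u\|^2_{L_2(P_0)}\ge\frac12\Delta$. (b) If $\theta>0$ and $0<\varrho\le\frac{1}{2\sqrt2}(2M)^{-\theta}\Delta^{\frac{1+\theta}{2}}$, then $\eta^2_\varrho(P,P_0)\ge\frac14\|u\|^2_{L_2(P_0)}\ge\frac14\Delta$.
   Context: $P_0$ is a probability measure on $(\mathcal X,\mathcal B)$ and $K$ a kernel with Mercer decomposition $K(x,x')=\sum_{k\ge1}\lambda_k\varphi_k(x)\varphi_k(x')$, $\lambda_1>\lambda_2>\cdots>0$, where $\{\varphi_k\}$ is an orthonormal basis of the $P_0$-mean-zero functions in $L_2(P_0)$. $\mathcal H(K)$ is the RKHS of $K$ with $\|f\|_K^2=\sum_k\lambda_k^{-1}\langle f,\varphi_k\rangle_{L_2(P_0)}^2$. $\mathcal F(\theta;M)$ ($\theta>0$) is the set of $f\in L_2(P_0)$ such that for every $R>0$ there is $f_R\in\mathcal H(K)$ with $\|f_R\|_K\le R$ and $\|f-f_R\|_{L_2(P_0)}\le MR^{-1/\theta}$; $\mathcal F(0;M)=\{f\in\mathcal H(K):\|f\|_K\le M\}$.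 $\mathcal P(\Delta,\theta,M)$ is the set of probability measures $P\ll P_0$ with $u=dP/dP_0-1\in\mathcal F(\theta;M)$ and $\|u\|^2_{L_2(P_0)}\ge\Delta$. Note $\mathbb E_P\varphi_k(X)=\langle u,\varphi_k\rangle_{L_2(P_0)}$. *)

theory Defs
  imports "HOL-Probability.Probability"
begin

definition sq_int :: "'a measure \<Rightarrow> ('a \<Rightarrow> real) \<Rightarrow> bool" where
  "sq_int M f \<longleftrightarrow> f \<in> borel_measurable M \<and> integrable M (\<lambda>x. (f x)\<^sup>2)"

definition L2_inner :: "'a measure \<Rightarrow> ('a \<Rightarrow> real) \<Rightarrow> ('a \<Rightarrow> real) \<Rightarrow> real" where
  "L2_inner M f g = (\<integral>x. f x * g x \<partial>M)"

definition L2_norm :: "'a measure \<Rightarrow> ('a \<Rightarrow> real) \<Rightarrow> real" where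
  "L2_norm M f = sqrt (\<integral>x. (f x)\<^sup>2 \<partial>M)"

definition mean_zero_ONB :: "'a measure \<Rightarrow> (nat \<Rightarrow> 'a \<Rightarrow> real) \<Rightarrow> bool" where
  "mean_zero_ONB M phi \<longleftrightarrow>
     (\<forall>k. sq_int M (phi k) \<and> (\<integral>x. phi k x \<partial>M) = 0) \<and>
     (\<forall>j k. L2_inner M (phi j) (phi k) = (if j = k then 1 else 0)) \<and>
     (\<forall>f. sq_int M f \<and> (\<integral>x. f x \<partial>M) = 0 \<and> (\<forall>k. L2_inner M f (phi k) = 0)
          \<longrightarrow> (AE x in M. f x = 0))"

text \<open>Membership in the RKHS H(K) and its norm, via the Mercer expansion.\<close>
definition in_RKHS :: "'a measure \<Rightarrow> (nat \<Rightarrow> 'a \<Rightarrow> real) \<Rightarrow> (nat \<Rightarrow> real) \<Rightarrow> ('a \<Rightarrow> real) \<Rightarrow> bool" where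
  "in_RKHS M phi lam f \<longleftrightarrow> sq_int M f \<and> (\<integral>x. f x \<partial>M) = 0 \<and>
     summable (\<lambda>k. (L2_inner M f (phi k))\<^sup>2 / lam k)"

definition RKHS_norm :: "'a measure \<Rightarrow> (nat \<Rightarrow> 'a \<Rightarrow> real) \<Rightarrow> (nat \<Rightarrow> real) \<Rightarrow> ('a \<Rightarrow> real) \<Rightarrow> real" where
  "RKHS_norm M phi lam f = sqrt (\<Sum>k. (L2_inner M f (phi k))\<^sup>2 / lam k)"

definition F_class :: "'a measure \<Rightarrow> (nat \<Rightarrow> 'a \<Rightarrow> real) \<Rightarrow> (nat \<Rightarrow> real) \<Rightarrow> real \<Rightarrow> real \<Rightarrow> ('a \<Rightarrow> real) \<Rightarrow> bool" where
  "F_class M phi lam \<theta> Mc f \<longleftrightarrow>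
     (if \<theta> = 0 then in_RKHS M phi lam f \<and> RKHS_norm M phi lam f \<le> Mc
      else sq_int M f \<and>
        (\<forall>R>0. \<exists>g. in_RKHS M phi lam g \<and> RKHS_norm M phi lam g \<le> R \<and>
                   L2_norm M (\<lambda>x. f x - g x) \<le> Mc * R powr (-1 / \<theta>)))"

definition dens_dev :: "'a measure \<Rightarrow> 'a measure \<Rightarrow> 'a \<Rightarrow> real" where
  "dens_dev P0 P x = enn2real (RN_deriv P0 P x) - 1"

definition P_class :: "'a measure \<Rightarrow> (nat \<Rightarrow> 'a \<Rightarrow> real) \<Rightarrow> (nat \<Rightarrow> real) \<Rightarrow> real \<Rightarrow> real \<Rightarrow> real \<Rightarrow> 'a measure \<Rightarrow> bool" where
  "P_class P0 phi lam \<Delta> \<theta> Mc P \<longleftrightarrow>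
     prob_space P \<and> sets P = sets P0 \<and> absolutely_continuous P0 P \<and>
     F_class P0 phi lam \<theta> Mc (dens_dev P0 P) \<and> (L2_norm P0 (dens_dev P0 P))\<^sup>2 \<ge> \<Delta>"

definition eta_sq :: "(nat \<Rightarrow> 'a \<Rightarrow> real) \<Rightarrow> (nat \<Rightarrow> real) \<Rightarrow> real \<Rightarrow> 'a measure \<Rightarrow> real" where
  "eta_sq phi lam \<rho> P = (\<Sum>k. lam k / (lam k + \<rho>\<^sup>2) * (\<integral>x. phi k x \<partial>P)\<^sup>2)"

end

theory Submission imports Defs begin

lemma sq_int_meas: "sq_int M f \<Longrightarrow> f \<in> borel_measurable M"
  by (simp add: sq_int_def)
lemma sq_int_int2: "sq_int M f \<Longrightarrow> integrable M (\<lambda>x. (f x)\<^sup>2)"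
  by (simp add: sq_int_def)

lemma sq_int_mult_integrable:
  assumes "sq_int M f" "sq_int M g"
  shows "integrable M (\<lambda>x. f x * g x)"
proof (rule Bochner_Integration.integrable_bound)
  show "integrable M (\<lambda>x. (f x)\<^sup>2 + (g x)\<^sup>2)" using assms by (simp add: sq_int_def)
  show "(\<lambda>x. f x * g x) \<in> borel_measurable M" using assms by (intro borel_measurable_times) (simp_all add: sq_int_def)
  show "AE x in M. norm (f x * g x) \<le> norm ((f x)\<^sup>2 + (g x)\<^sup>2)"
  proof (rule AE_I2)
    fix x
    have h2: "2 * (\<bar>f x\<bar> * \<bar>g x\<bar>) \<le> (f x)\<^sup>2 + (g x)\<^sup>2"
      using sum_squares_bound[of "\<bar>f x\<bar>" "\<bar>g x\<bar>"] by (simp add: mult.assoc)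
    have h0: "0 \<le> \<bar>f x\<bar> * \<bar>g x\<bar>" by simp
    have "\<bar>f x\<bar> * \<bar>g x\<bar> \<le> (f x)\<^sup>2 + (g x)\<^sup>2" using h2 h0 by linarith
    then show "norm (f x * g x) \<le> norm ((f x)\<^sup>2 + (g x)\<^sup>2)"
      by (simp add: abs_mult)
  qed
qed

lemma sq_int_const: "finite_measure M \<Longrightarrow> sq_int M (\<lambda>x. c)"
  by (simp add: sq_int_def finite_measure.integrable_const)

lemma sq_int_integrable: "finite_measure M \<Longrightarrow> sq_int M f \<Longrightarrow> integrable M f"
  using sq_int_mult_integrable[of M f "\<lambda>x. 1"] sq_int_const[of M 1] by simp

lemma sq_int_add: assumes "sq_int M f" "sq_int M g" shows "sq_int M (\<lambda>x. f x + g x)"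
proof -
  have "integrable M (\<lambda>x. (f x)\<^sup>2 + (g x)\<^sup>2 + 2 * (f x * g x))"
    using assms sq_int_mult_integrable[OF assms] by (simp add: sq_int_def)
  have [measurable]: "f \<in> borel_measurable M" "g \<in> borel_measurable M" using assms by (simp_all add: sq_int_def)
  show ?thesis using \<open>integrable M _\<close> unfolding sq_int_def by (simp add: power2_sum mult.assoc)
qed

lemma sq_int_scale: assumes "sq_int M f" shows "sq_int M (\<lambda>x. c * f x)"
proof -
  have [measurable]: "f \<in> borel_measurable M" using assms by (simp add: sq_int_def)
  show ?thesis using assms unfolding sq_int_def by (simp add: power_mult_distrib)
qed

lemma sq_int_diff: assumes "sq_int M f" "sq_int M g" shows "sq_int M (\<lambda>x. f x - g x)"
  using sq_int_add[OF assms(1) sq_int_scale[OF assms(2), of "-1"]] by simp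

lemma sq_int_sum: assumes "\<And>k. k \<in> A \<Longrightarrow> sq_int M (f k)" shows "sq_int M (\<lambda>x. \<Sum>k\<in>A. f k x)"
  using assms
proof (induction A rule: infinite_finite_induct)
  case (infinite A) then show ?case by (simp add: sq_int_def)
next
  case empty then show ?case by (simp add: sq_int_def)
next
  case (insert a A) then show ?case by (simp add: sq_int_add)
qed

definition ON :: "'a measure \<Rightarrow> (nat \<Rightarrow> 'a \<Rightarrow> real) \<Rightarrow> bool" where
  "ON M phi \<longleftrightarrow> (\<forall>k. sq_int M (phi k)) \<and> (\<forall>j k. L2_inner M (phi j) (phi k) = (if j = k then 1 else 0))"

lemma ON_sq: "ON M phi \<Longrightarrow> sq_int M (phi k)" by (simp add: ON_def)
lemma ON_inner: "ON M phi \<Longrightarrow> (\<integral>x. phi j x * phi k x \<partial>M) = (if j = k then 1 else 0)"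
  by (simp add: ON_def L2_inner_def)

lemma ON_inner_sum:
  assumes "ON M phi" "sq_int M f"
  shows "(\<integral>x. f x * (\<Sum>k\<in>A. a k * phi k x) \<partial>M) = (\<Sum>k\<in>A. a k * L2_inner M f (phi k))"
proof -
  have "(\<integral>x. f x * (\<Sum>k\<in>A. a k * phi k x) \<partial>M) = (\<integral>x. (\<Sum>k\<in>A. a k * (f x * phi k x)) \<partial>M)"
    by (simp add: sum_distrib_left mult.assoc mult.left_commute)
  also have "\<dots> = (\<Sum>k\<in>A. (\<integral>x. a k * (f x * phi k x) \<partial>M))"
    using sq_int_mult_integrable[OF assms(2) ON_sq[OF assms(1)]]
    by (intro Bochner_Integration.integral_sum) auto
  also have "\<dots> = (\<Sum>k\<in>A. a k * L2_inner M f (phi k))"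
    by (simp add: L2_inner_def)
  finally show ?thesis .
qed

lemma ON_sum_sq:
  assumes "ON M phi" "finite A"
  shows "(\<integral>x. (\<Sum>k\<in>A. a k * phi k x)\<^sup>2 \<partial>M) = (\<Sum>k\<in>A. (a k)\<^sup>2)"
proof -
  have sq: "sq_int M (\<lambda>x. \<Sum>k\<in>A. a k * phi k x)"
    by (intro sq_int_sum sq_int_scale ON_sq[OF assms(1)])
  have "(\<integral>x. (\<Sum>k\<in>A. a k * phi k x)\<^sup>2 \<partial>M) = (\<integral>x. (\<Sum>k\<in>A. a k * phi k x) * (\<Sum>k\<in>A. a k * phi k x) \<partial>M)"
    by (simp add: power2_eq_square)
  also have "\<dots> = (\<Sum>j\<in>A. a j * L2_inner M (\<lambda>x. \<Sum>k\<in>A. a k * phi k x) (phi j))"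
    by (rule ON_inner_sum[OF assms(1) sq])
  also have "\<dots> = (\<Sum>j\<in>A. a j * (\<Sum>k\<in>A. a k * (if k = j then 1 else 0)))"
  proof (rule sum.cong[OF refl])
    fix j assume "j \<in> A"
    have "L2_inner M (\<lambda>x. \<Sum>k\<in>A. a k * phi k x) (phi j) = (\<integral>x. phi j x * (\<Sum>k\<in>A. a k * phi k x) \<partial>M)"
      by (simp add: L2_inner_def mult.commute)
    also have "\<dots> = (\<Sum>k\<in>A. a k * L2_inner M (phi j) (phi k))"
      by (rule ON_inner_sum[OF assms(1) ON_sq[OF assms(1)]])
    also have "\<dots> = (\<Sum>k\<in>A. a k * (if k = j then 1 else 0))"
      using assms(1) by (auto simp: ON_def intro!: sum.cong)
    finally show "a j * L2_inner M (\<lambda>x. \<Sum>k\<in>A. a k * phi k x) (phi j) = a j * (\<Sum>k\<in>A. a k * (if k = j then 1 else 0))"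
      by simp
  qed
  also have "\<dots> = (\<Sum>k\<in>A. (a k)\<^sup>2)"
  proof (rule sum.cong[OF refl])
    fix j assume j: "j \<in> A"
    have "(\<Sum>k\<in>A. a k * (if k = j then 1 else 0)) = (\<Sum>k\<in>A. if k = j then a k else 0)"
      by (rule sum.cong) auto
    also have "\<dots> = a j" using j assms(2) by (simp add: sum.delta')
    finally show "a j * (\<Sum>k\<in>A. a k * (if k = j then 1 else 0)) = (a j)\<^sup>2"
      by (simp add: power2_eq_square)
  qed
  finally show ?thesis .
qed

lemma bessel_id:
  assumes "ON M phi" "sq_int M f" "finite A"
  shows "(\<integral>x. (f x - (\<Sum>k\<in>A. L2_inner M f (phi k) * phi k x))\<^sup>2 \<partial>M)
        = (\<integral>x. (f x)\<^sup>2 \<partial>M) - (\<Sum>k\<in>A. (L2_inner M f (phi k))\<^sup>2)"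
proof -
  define s where "s = (\<lambda>x. \<Sum>k\<in>A. L2_inner M f (phi k) * phi k x)"
  have sq: "sq_int M s" unfolding s_def
    by (intro sq_int_sum sq_int_scale ON_sq[OF assms(1)])
  have i1: "integrable M (\<lambda>x. (f x)\<^sup>2)" using assms(2) by (simp add: sq_int_def)
  have i2: "integrable M (\<lambda>x. (s x)\<^sup>2)" using sq by (simp add: sq_int_def)
  have i3: "integrable M (\<lambda>x. f x * s x)" by (rule sq_int_mult_integrable[OF assms(2) sq])
  have e: "(f x - s x)\<^sup>2 = (f x)\<^sup>2 + (s x)\<^sup>2 - 2 * (f x * s x)" for x
    by (simp only: power2_diff mult.assoc)
  have "(\<integral>x. (f x - s x)\<^sup>2 \<partial>M) = (\<integral>x. (f x)\<^sup>2 + (s x)\<^sup>2 - 2 * (f x * s x) \<partial>M)"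
    by (simp only: e)
  also have "\<dots> = (\<integral>x. (f x)\<^sup>2 + (s x)\<^sup>2 \<partial>M) - (\<integral>x. 2 * (f x * s x) \<partial>M)"
    by (rule Bochner_Integration.integral_diff) (use i1 i2 i3 in auto)
  also have "(\<integral>x. (f x)\<^sup>2 + (s x)\<^sup>2 \<partial>M) = (\<integral>x. (f x)\<^sup>2 \<partial>M) + (\<integral>x. (s x)\<^sup>2 \<partial>M)"
    by (rule Bochner_Integration.integral_add[OF i1 i2])
  also have "(\<integral>x. 2 * (f x * s x) \<partial>M) = 2 * (\<integral>x. f x * s x \<partial>M)"
    by (rule integral_mult_right_zero)
  also have "(\<integral>x. (s x)\<^sup>2 \<partial>M) = (\<Sum>k\<in>A. (L2_inner M f (phi k))\<^sup>2)"
    unfolding s_def by (rule ON_sum_sq[OF assms(1,3)])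
  also have "(\<integral>x. f x * s x \<partial>M) = (\<Sum>k\<in>A. (L2_inner M f (phi k))\<^sup>2)"
    unfolding s_def ON_inner_sum[OF assms(1,2)] by (simp only: power2_eq_square)
  finally show ?thesis unfolding s_def by linarith
qed

lemma bessel:
  assumes "ON M phi" "sq_int M f"
  shows "summable (\<lambda>k. (L2_inner M f (phi k))\<^sup>2)"
    and "(\<Sum>k. (L2_inner M f (phi k))\<^sup>2) \<le> (\<integral>x. (f x)\<^sup>2 \<partial>M)"
proof -
  have b: "(\<Sum>k<n. (L2_inner M f (phi k))\<^sup>2) \<le> (\<integral>x. (f x)\<^sup>2 \<partial>M)" for n
    using bessel_id[OF assms, of "{..<n}"] integral_nonneg_AE[of "\<lambda>x. (f x - (\<Sum>k<n. L2_inner M f (phi k) * phi k x))\<^sup>2" M]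
    by simp
  show s: "summable (\<lambda>k. (L2_inner M f (phi k))\<^sup>2)"
    by (rule summableI_nonneg_bounded[OF _ b]) simp
  show "(\<Sum>k. (L2_inner M f (phi k))\<^sup>2) \<le> (\<integral>x. (f x)\<^sup>2 \<partial>M)"
    by (rule suminf_le_const[OF s b])
qed

lemma abs_le_aux: "(t::real) > 0 \<Longrightarrow> \<bar>d\<bar> \<le> 1/t + t * d\<^sup>2"
proof (cases "t * \<bar>d\<bar> \<le> 1")
  case True
  assume t: "t > 0"
  have "\<bar>d\<bar> \<le> 1/t" using True t by (simp add: le_divide_eq mult.commute)
  moreover have "0 \<le> t * d\<^sup>2" using t by simp
  ultimately show ?thesis by linarith
next
  case False
  assume t: "t > 0"
  have "\<bar>d\<bar> \<le> (t * \<bar>d\<bar>) * \<bar>d\<bar>" using False by (simp add: mult_le_cancel_right1)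
  also have "\<dots> = t * d\<^sup>2" by (simp add: power2_eq_square abs_mult_self_eq)
  moreover have "0 < 1/t" using t by simp
  ultimately show ?thesis by linarith
qed

lemma small_inner:
  assumes "sq_int M h" "sq_int M f" "(\<integral>x. (f x)\<^sup>2 \<partial>M) \<le> 1" "(\<integral>x. (h x)\<^sup>2 \<partial>M) \<le> e\<^sup>2" "e > 0"
  shows "\<bar>\<integral>x. h x * f x \<partial>M\<bar> \<le> e"
proof -
  have pw: "\<bar>h x * f x\<bar> \<le> ((h x)\<^sup>2 / e + e * (f x)\<^sup>2) / 2" for x
  proof -
    have "0 \<le> (\<bar>h x\<bar> - e * \<bar>f x\<bar>)\<^sup>2" by simp
    then have "2 * e * (\<bar>h x\<bar> * \<bar>f x\<bar>) \<le> (h x)\<^sup>2 + e\<^sup>2 * (f x)\<^sup>2"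
      by (simp add: power2_diff power_mult_distrib algebra_simps)
    then show ?thesis using assms(5)
      by (simp add: abs_mult field_simps power2_eq_square)
  qed
  have i: "integrable M (\<lambda>x. ((h x)\<^sup>2 / e + e * (f x)\<^sup>2) / 2)"
    using assms(1,2) by (simp add: sq_int_def)
  have ihf: "integrable M (\<lambda>x. h x * f x)" by (rule sq_int_mult_integrable[OF assms(1,2)])
  have "\<bar>\<integral>x. h x * f x \<partial>M\<bar> \<le> (\<integral>x. \<bar>h x * f x\<bar> \<partial>M)"
    using integral_norm_bound[of M "\<lambda>x. h x * f x"] by simp
  also have "\<dots> \<le> (\<integral>x. ((h x)\<^sup>2 / e + e * (f x)\<^sup>2) / 2 \<partial>M)"
    by (rule integral_mono[OF _ i]) (use ihf pw in auto)
  also have "\<dots> = ((\<integral>x. (h x)\<^sup>2 \<partial>M) / e + e * (\<integral>x. (f x)\<^sup>2 \<partial>M)) / 2"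
    using assms(1,2) by (simp add: sq_int_def)
  also have "\<dots> \<le> (e\<^sup>2 / e + e * 1) / 2"
    using assms(3,4,5) by (intro divide_right_mono add_mono divide_right_mono mult_left_mono) auto
  also have "\<dots> = e" by (simp add: power2_eq_square)
  finally show ?thesis .
qed

lemma eps_zero: assumes H: "\<And>e. e > 0 \<Longrightarrow> \<bar>a\<bar> \<le> e" shows "a = (0::real)"
proof (rule ccontr)
  assume "a \<noteq> 0"
  then have p: "\<bar>a\<bar> > 0" by simp
  then have "\<bar>a\<bar> \<le> \<bar>a\<bar> / 2" by (intro H) simp
  then show False using p by simp
qed

lemma parseval_ge:
  assumes P: "prob_space M" and ON: "ON M phi" and u: "sq_int M u" and u0: "(\<integral>x. u x \<partial>M) = 0"
    and mz: "\<And>k. (\<integral>x. phi k x \<partial>M) = 0"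
    and compl: "\<And>f. sq_int M f \<Longrightarrow> (\<integral>x. f x \<partial>M) = 0 \<Longrightarrow> (\<forall>k. L2_inner M f (phi k) = 0) \<Longrightarrow> (AE x in M. f x = 0)"
  shows "(\<integral>x. (u x)\<^sup>2 \<partial>M) \<le> (\<Sum>k. (L2_inner M u (phi k))\<^sup>2)"
proof -
  have FM: "finite_measure M" using P by (rule prob_space.finite_measure)
  define c where "c k = L2_inner M u (phi k)" for k
  define s where "s n x = (\<Sum>k<n. c k * phi k x)" for n x
  define T where "T n = (\<Sum>k. (c (k + n))\<^sup>2)" for n
  have summ: "summable (\<lambda>k. (c k)\<^sup>2)" unfolding c_def by (rule bessel(1)[OF ON u])
  have summT: "summable (\<lambda>k. (c (k + n))\<^sup>2)" for n
    using summable_ignore_initial_segment[OF summ, of n] by simp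
  have T0: "T n \<ge> 0" for n unfolding T_def by (rule suminf_nonneg[OF summT]) simp
  have Tlim: "T \<longlonglongrightarrow> 0" unfolding T_def by (rule suminf_exist_split2[OF summ])
  have sq_s: "sq_int M (s n)" for n
    unfolding s_def by (intro sq_int_sum sq_int_scale ON_sq[OF ON])
  have [measurable]: "s n \<in> borel_measurable M" for n using sq_s by (simp add: sq_int_def)
  have diff_le: "(\<integral>x. (s n x - s m x)\<^sup>2 \<partial>M) \<le> T m" if "m \<le> n" for m n
  proof -
    have "s n x - s m x = (\<Sum>k\<in>{m..<n}. c k * phi k x)" for x
    proof -
      have e: "{..<n} = {..<m} \<union> {m..<n}" using that by auto
      have "s n x = s m x + (\<Sum>k\<in>{m..<n}. c k * phi k x)"
        unfolding s_def e by (rule sum.union_disjoint) auto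
      then show ?thesis by simp
    qed
    then have "(\<integral>x. (s n x - s m x)\<^sup>2 \<partial>M) = (\<Sum>k\<in>{m..<n}. (c k)\<^sup>2)"
      using ON_sum_sq[OF ON, of "{m..<n}" c] by simp
    also have "\<dots> = (\<Sum>i\<in>{0..<n-m}. (c (i + m))\<^sup>2)"
      using sum.shift_bounds_nat_ivl[of "\<lambda>k. (c k)\<^sup>2" 0 m "n - m"] that by simp
    also have "\<dots> \<le> T m" unfolding T_def
      by (rule sum_le_suminf[OF summT]) auto
    finally show ?thesis .
  qed
  have diff_le2: "(\<integral>x. (s n x - s m x)\<^sup>2 \<partial>M) \<le> T n + T m" for m n
  proof (cases "m \<le> n")
    case True then show ?thesis using diff_le[OF True] T0[of n] by linarith
  next
    case False
    then have "(\<integral>x. (s m x - s n x)\<^sup>2 \<partial>M) \<le> T n" using diff_le[of n m] by simp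
    moreover have "(\<lambda>x. (s n x - s m x)\<^sup>2) = (\<lambda>x. (s m x - s n x)\<^sup>2)"
      by (simp add: power2_commute)
    ultimately show ?thesis using T0[of m] by simp
  qed
  have "\<exists>n. T n \<le> (1/8)^j" for j::nat
  proof -
    have "eventually (\<lambda>n. T n < (1/8)^j) sequentially"
      by (rule order_tendstoD(2)[OF Tlim]) simp
    then show ?thesis by (metis eventually_sequentially order.refl less_imp_le)
  qed
  then obtain N where N: "\<And>j. T (N j) \<le> (1/8)^j" by metis
  define d where "d j x = s (N (Suc j)) x - s (N j) x" for j x
  define h where "h j x = 2^j * (d j x)\<^sup>2" for j x
  have [measurable]: "d j \<in> borel_measurable M" for j unfolding d_def by measurable
  have [measurable]: "h j \<in> borel_measurable M" for j unfolding h_def by measurable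
  have ih: "integrable M (h j)" for j
    using sq_int_diff[OF sq_s sq_s, of "N (Suc j)" "N j"] unfolding h_def d_def sq_int_def by simp
  have inth: "(\<integral>x. h j x \<partial>M) \<le> 2 * (1/4)^j" for j
  proof -
    have "(\<integral>x. (d j x)\<^sup>2 \<partial>M) \<le> T (N (Suc j)) + T (N j)"
      unfolding d_def by (rule diff_le2)
    also have "\<dots> \<le> (1/8)^(Suc j) + (1/8)^j" using N[of "Suc j"] N[of j] by (rule add_mono)
    also have "\<dots> \<le> 2 * (1/8)^j" by simp
    finally have a: "(\<integral>x. (d j x)\<^sup>2 \<partial>M) \<le> 2 * (1/8)^j" .
    have "(\<integral>x. h j x \<partial>M) = 2^j * (\<integral>x. (d j x)\<^sup>2 \<partial>M)" unfolding h_def by simp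
    also have "\<dots> \<le> 2^j * (2 * (1/8)^j)" using a by (intro mult_left_mono) auto
    also have "\<dots> = 2 * ((2::real)^j * (1/8)^j)" by simp
    also have "(2::real)^j * (1/8)^j = (2 * (1/8))^j" by (rule power_mult_distrib[symmetric])
    also have "2 * ((2::real) * (1/8))^j = 2 * (1/4)^j" by simp
    finally show ?thesis .
  qed
  have h0: "0 \<le> h j x" for j x unfolding h_def by simp
  have "(\<integral>\<^sup>+x. (\<Sum>j. ennreal (h j x)) \<partial>M) = (\<Sum>j. \<integral>\<^sup>+x. ennreal (h j x) \<partial>M)"
    by (rule nn_integral_suminf) measurable
  also have "\<dots> = (\<Sum>j. ennreal (\<integral>x. h j x \<partial>M))"
    using nn_integral_eq_integral[OF ih] h0 by simp
  also have "\<dots> \<le> (\<Sum>j. ennreal (2 * (1/4)^j))"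
    by (rule suminf_le) (simp_all add: ennreal_leI inth)
  also have "\<dots> = ennreal (\<Sum>j. 2 * (1/4)^j)"
  proof (rule suminf_ennreal2)
    show "summable (\<lambda>j. 2 * (1/4::real)^j)" by (rule summable_mult, rule summable_geometric) simp
  qed simp
  finally have le: "(\<integral>\<^sup>+x. (\<Sum>j. ennreal (h j x)) \<partial>M) \<le> ennreal (\<Sum>j. 2 * (1/4)^j)" .
  have "(\<integral>\<^sup>+x. (\<Sum>j. ennreal (h j x)) \<partial>M) \<noteq> \<infinity>"
    using neq_top_trans[OF ennreal_neq_top le] by simp
  then have AEfin: "AE x in M. (\<Sum>j. ennreal (h j x)) \<noteq> \<infinity>"
    by (intro nn_integral_PInf_AE) measurable
  define g where "g x = lim (\<lambda>j. s (N j) x)" for x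
  have [measurable]: "g \<in> borel_measurable M"
    unfolding g_def by (rule borel_measurable_lim_metric) measurable
  have conv: "AE x in M. (\<lambda>j. s (N j) x) \<longlonglongrightarrow> g x"
    using AEfin
  proof eventually_elim
    case (elim x)
    have sh: "summable (\<lambda>j. h j x)"
      by (rule summable_suminf_not_top) (use h0 elim in auto)
    have c1: "summable (\<lambda>j. (1/2::real)^j + h j x)"
      by (intro summable_add sh summable_geometric) simp
    have c2: "norm (d j x) \<le> (1/2)^j + h j x" for j
    proof -
      have a: "\<bar>d j x\<bar> \<le> 1/2^j + 2^j * (d j x)\<^sup>2" by (rule abs_le_aux) simp
      have b: "(1/2::real)^j = 1/2^j" by (rule power_one_over)
      show ?thesis unfolding h_def b real_norm_def by (rule a)
    qed
    have sd: "summable (\<lambda>j. d j x)"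
      by (rule summable_comparison_test'[OF c1, of 0]) (rule c2)
    have tel: "s (N j) x = s (N 0) x + (\<Sum>i<j. d i x)" for j
    proof -
      have "(\<Sum>i<j. d i x) = s (N j) x - s (N 0) x"
        unfolding d_def by (rule sum_lessThan_telescope)
      then show ?thesis by linarith
    qed
    have "(\<lambda>j. s (N 0) x + (\<Sum>i<j. d i x)) \<longlonglongrightarrow> s (N 0) x + suminf (\<lambda>j. d j x)"
      by (intro tendsto_add tendsto_const summable_LIMSEQ sd)
    moreover have "(\<lambda>j. s (N j) x) = (\<lambda>j. s (N 0) x + (\<Sum>i<j. d i x))"
      by (rule ext) (rule tel)
    ultimately have "convergent (\<lambda>j. s (N j) x)" unfolding convergent_def by metis
    then show ?case unfolding g_def by (simp add: convergent_LIMSEQ_iff)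
  qed
  have fatou: "integrable M (\<lambda>x. (g x - s n x)\<^sup>2) \<and> (\<integral>x. (g x - s n x)\<^sup>2 \<partial>M) \<le> T n" for n
  proof -
    define F where "F j x = ennreal ((s (N j) x - s n x)\<^sup>2)" for j x
    have [measurable]: "F j \<in> borel_measurable M" for j unfolding F_def by measurable
    have AEl: "AE x in M. ennreal ((g x - s n x)\<^sup>2) = liminf (\<lambda>j. F j x)"
      using conv
    proof eventually_elim
      case (elim x)
      have "(\<lambda>j. F j x) \<longlonglongrightarrow> ennreal ((g x - s n x)\<^sup>2)"
        unfolding F_def by (intro tendsto_ennrealI tendsto_intros elim)
      then show ?case by (simp add: lim_imp_Liminf)
    qed
    have ifj: "(\<integral>\<^sup>+x. F j x \<partial>M) \<le> ennreal ((1/8)^j + T n)" for j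
    proof -
      have i: "integrable M (\<lambda>x. (s (N j) x - s n x)\<^sup>2)"
        using sq_int_diff[OF sq_s sq_s, of "N j" n] unfolding sq_int_def by simp
      have "(\<integral>\<^sup>+x. F j x \<partial>M) = ennreal (\<integral>x. (s (N j) x - s n x)\<^sup>2 \<partial>M)"
        unfolding F_def by (rule nn_integral_eq_integral[OF i]) simp
      also have "\<dots> \<le> ennreal ((1/8)^j + T n)"
        using diff_le2[of "N j" n] N[of j] by (intro ennreal_leI) linarith
      finally show ?thesis .
    qed
    have "(\<integral>\<^sup>+x. ennreal ((g x - s n x)\<^sup>2) \<partial>M) = (\<integral>\<^sup>+x. liminf (\<lambda>j. F j x) \<partial>M)"
      by (rule nn_integral_cong_AE[OF AEl])
    also have "\<dots> \<le> liminf (\<lambda>j. \<integral>\<^sup>+x. F j x \<partial>M)"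
      by (rule nn_integral_liminf) measurable
    also have "\<dots> \<le> liminf (\<lambda>j. ennreal ((1/8)^j + T n))"
      by (intro Liminf_mono always_eventually allI ifj)
    also have "\<dots> = ennreal (T n)"
    proof -
      have "(\<lambda>j. ennreal ((1/8)^j + T n)) \<longlonglongrightarrow> ennreal (0 + T n)"
        by (intro tendsto_ennrealI tendsto_add tendsto_const LIMSEQ_power_zero) simp
      then show ?thesis by (simp add: lim_imp_Liminf)
    qed
    finally have le: "(\<integral>\<^sup>+x. ennreal ((g x - s n x)\<^sup>2) \<partial>M) \<le> ennreal (T n)" .
    have int: "integrable M (\<lambda>x. (g x - s n x)\<^sup>2)"
    proof (rule integrableI_nonneg)
      show "(\<lambda>x. (g x - s n x)\<^sup>2) \<in> borel_measurable M" by measurable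
      show "AE x in M. 0 \<le> (g x - s n x)\<^sup>2" by simp
      show "(\<integral>\<^sup>+x. ennreal ((g x - s n x)\<^sup>2) \<partial>M) < \<infinity>"
        using le_less_trans[OF le ennreal_less_top] by simp
    qed
    have "ennreal (\<integral>x. (g x - s n x)\<^sup>2 \<partial>M) \<le> ennreal (T n)"
      using le nn_integral_eq_integral[OF int] by simp
    then have "(\<integral>x. (g x - s n x)\<^sup>2 \<partial>M) \<le> T n"
      using T0[of n] by (simp add: ennreal_le_iff)
    with int show ?thesis by simp
  qed
  have sq_gs: "sq_int M (\<lambda>x. g x - s n x)" for n
    using fatou[of n] unfolding sq_int_def by simp
  have sq_g: "sq_int M g" using sq_gs[of 0] by (simp add: s_def)
  have int1: "(\<integral>x. (1::real)\<^sup>2 \<partial>M) \<le> 1"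
    using P by (simp add: prob_space.prob_space)
  have small: "\<exists>n\<ge>m. T n \<le> e\<^sup>2" if "e > 0" for e m
  proof -
    have "eventually (\<lambda>n. T n < e\<^sup>2) sequentially"
      by (rule order_tendstoD(2)[OF Tlim]) (use that in simp)
    then obtain n0 where "\<And>n. n \<ge> n0 \<Longrightarrow> T n < e\<^sup>2" by (auto simp: eventually_sequentially)
    then have "T (max m n0) < e\<^sup>2" by simp
    then show ?thesis by (intro exI[of _ "max m n0"]) auto
  qed
  have is_s: "(\<integral>x. s n x \<partial>M) = 0" for n
    unfolding s_def using sq_int_integrable[OF FM ON_sq[OF ON]] mz by simp
  have g_mean: "(\<integral>x. g x \<partial>M) = 0"
  proof (rule eps_zero)
    fix e :: real assume e: "e > 0"
    obtain n where n: "T n \<le> e\<^sup>2" using small[OF e, of 0] by auto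
    have "(\<integral>x. g x \<partial>M) = (\<integral>x. (g x - s n x) + s n x \<partial>M)" by simp
    also have "\<dots> = (\<integral>x. (g x - s n x) * 1 \<partial>M)"
      using sq_int_integrable[OF FM sq_g] sq_int_integrable[OF FM sq_s[of n]] is_s[of n] by simp
    finally have eq: "(\<integral>x. g x \<partial>M) = (\<integral>x. (g x - s n x) * 1 \<partial>M)" .
    show "\<bar>\<integral>x. g x \<partial>M\<bar> \<le> e" unfolding eq
      by (rule small_inner[OF sq_gs sq_int_const[OF FM] int1 _ e]) (use fatou[of n] n in auto)
  qed
  have g_inner: "L2_inner M g (phi k) = c k" for k
  proof -
    have "\<bar>L2_inner M g (phi k) - c k\<bar> \<le> e" if e: "e > 0" for e
    proof -
      obtain n where n: "n \<ge> Suc k" "T n \<le> e\<^sup>2" using small[OF e, of "Suc k"] by auto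
      have "(\<integral>x. phi k x * s n x \<partial>M) = (\<Sum>j<n. c j * L2_inner M (phi k) (phi j))"
        unfolding s_def by (rule ON_inner_sum[OF ON ON_sq[OF ON]])
      also have "\<dots> = (\<Sum>j<n. if j = k then c j else 0)"
        using ON by (intro sum.cong) (auto simp: ON_def)
      also have "\<dots> = c k" using n(1) by simp
      finally have sk: "(\<integral>x. s n x * phi k x \<partial>M) = c k" by (simp add: mult.commute)
      have "L2_inner M g (phi k) = (\<integral>x. (g x - s n x) * phi k x + s n x * phi k x \<partial>M)"
        unfolding L2_inner_def by (simp add: algebra_simps)
      also have "\<dots> = (\<integral>x. (g x - s n x) * phi k x \<partial>M) + c k"
        using sq_int_mult_integrable[OF sq_gs[of n] ON_sq[OF ON, of k]]
          sq_int_mult_integrable[OF sq_s[of n] ON_sq[OF ON, of k]] sk by simp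
      finally have "L2_inner M g (phi k) - c k = (\<integral>x. (g x - s n x) * phi k x \<partial>M)" by simp
      moreover have "\<bar>\<integral>x. (g x - s n x) * phi k x \<partial>M\<bar> \<le> e"
        by (rule small_inner[OF sq_gs ON_sq[OF ON] _ _ e])
           (use fatou[of n] n ON_inner[OF ON, of k k] in \<open>auto simp: power2_eq_square\<close>)
      ultimately show ?thesis by simp
    qed
    then show ?thesis using eps_zero[of "L2_inner M g (phi k) - c k"] by simp
  qed
  have AEug: "AE x in M. u x - g x = 0"
  proof (rule compl)
    show "sq_int M (\<lambda>x. u x - g x)" by (rule sq_int_diff[OF u sq_g])
    show "(\<integral>x. u x - g x \<partial>M) = 0"
      using sq_int_integrable[OF FM u] sq_int_integrable[OF FM sq_g] u0 g_mean by simp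
    show "\<forall>k. L2_inner M (\<lambda>x. u x - g x) (phi k) = 0"
    proof
      fix k
      have "L2_inner M (\<lambda>x. u x - g x) (phi k) = L2_inner M u (phi k) - L2_inner M g (phi k)"
        unfolding L2_inner_def using sq_int_mult_integrable[OF u ON_sq[OF ON, of k]]
          sq_int_mult_integrable[OF sq_g ON_sq[OF ON, of k]] by (simp add: left_diff_distrib)
      then show "L2_inner M (\<lambda>x. u x - g x) (phi k) = 0" using g_inner[of k] by (simp add: c_def)
    qed
  qed
  have "(\<integral>x. (u x)\<^sup>2 \<partial>M) = (\<integral>x. (g x - s 0 x)\<^sup>2 \<partial>M)"
  proof (rule integral_cong_AE)
    have [measurable]: "u \<in> borel_measurable M" using u by (simp add: sq_int_def)
    show "(\<lambda>x. (u x)\<^sup>2) \<in> borel_measurable M" by measurable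
    show "(\<lambda>x. (g x - s 0 x)\<^sup>2) \<in> borel_measurable M" by measurable
    show "AE x in M. (u x)\<^sup>2 = (g x - s 0 x)\<^sup>2"
      using AEug
    proof eventually_elim
      case (elim x)
      then have "u x = g x" by simp
      moreover have "s 0 x = 0" by (simp add: s_def)
      ultimately show ?case by simp
    qed
  qed
  also have "\<dots> \<le> T 0" using fatou[of 0] by (rule conjunct2)
  also have "T 0 = (\<Sum>k. (L2_inner M u (phi k))\<^sup>2)" by (simp add: T_def c_def)
  finally show ?thesis .
qed

lemma R_calc1:
  assumes "Mc > 0" "\<Delta> > 0" "\<theta> > 0"
  shows "Mc * ((2*Mc) powr \<theta> * \<Delta> powr (-\<theta>/2)) powr (-1/\<theta>) = sqrt \<Delta> / 2"
proof -
  have "((2*Mc) powr \<theta> * \<Delta> powr (-\<theta>/2)) powr (-1/\<theta>)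
        = ((2*Mc) powr \<theta>) powr (-1/\<theta>) * (\<Delta> powr (-\<theta>/2)) powr (-1/\<theta>)"
    using assms by (simp add: powr_mult)
  also have "\<dots> = (2*Mc) powr (\<theta> * (-1/\<theta>)) * \<Delta> powr ((-\<theta>/2) * (-1/\<theta>))"
    by (simp add: powr_powr)
  also have "\<theta> * (-1/\<theta>) = -1" using assms by simp
  also have "(-\<theta>/2) * (-1/\<theta>) = 1/2" using assms by simp
  also have "(2*Mc) powr (-1) = 1 / (2*Mc)" using assms by (simp add: powr_minus_divide)
  also have "\<Delta> powr (1/2) = sqrt \<Delta>" using assms by (simp add: powr_half_sqrt)
  finally show ?thesis using assms by simp
qed

lemma R_calc2:
  assumes "Mc > 0" "\<Delta> > 0" "\<theta> > 0"
  shows "(2*Mc) powr (-\<theta>) * \<Delta> powr ((1+\<theta>)/2) * ((2*Mc) powr \<theta> * \<Delta> powr (-\<theta>/2)) = sqrt \<Delta>"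
proof -
  have "(2*Mc) powr (-\<theta>) * \<Delta> powr ((1+\<theta>)/2) * ((2*Mc) powr \<theta> * \<Delta> powr (-\<theta>/2))
      = ((2*Mc) powr (-\<theta>) * (2*Mc) powr \<theta>) * (\<Delta> powr ((1+\<theta>)/2) * \<Delta> powr (-\<theta>/2))"
    by (simp add: algebra_simps)
  also have "(2*Mc) powr (-\<theta>) * (2*Mc) powr \<theta> = (2*Mc) powr (-\<theta> + \<theta>)"
    by (rule powr_add[symmetric])
  also have "\<Delta> powr ((1+\<theta>)/2) * \<Delta> powr (-\<theta>/2) = \<Delta> powr ((1+\<theta>)/2 + -\<theta>/2)"
    by (rule powr_add[symmetric])
  also have "(1+\<theta>)/2 + -\<theta>/2 = 1/2" by (simp add: field_simps)
  also have "\<Delta> powr (1/2) = sqrt \<Delta>" using assms by (simp add: powr_half_sqrt)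
  finally show ?thesis using assms by simp
qed

lemma EP_coef:
  assumes P0: "prob_space P0" and P: "prob_space P" and sets: "sets P = sets P0"
    and ac: "absolutely_continuous P0 P" and u: "sq_int P0 (dens_dev P0 P)" and f: "sq_int P0 f"
  shows "(\<integral>x. f x \<partial>P) = L2_inner P0 (dens_dev P0 P) f + (\<integral>x. f x \<partial>P0)"
proof -
  interpret P0: prob_space P0 by fact
  interpret P: prob_space P by fact
  have FM: "finite_measure P0" by (rule P0.finite_measure_axioms)
  have [measurable]: "f \<in> borel_measurable P0" using f by (simp add: sq_int_def)
  have "(\<integral>x. f x \<partial>P) = (\<integral>x. enn2real (RN_deriv P0 P x) * f x \<partial>P0)"
    by (rule P0.RN_deriv_integral[OF P.sigma_finite_measure_axioms ac sets]) measurable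
  also have "\<dots> = (\<integral>x. dens_dev P0 P x * f x + f x \<partial>P0)"
    by (simp add: dens_dev_def algebra_simps)
  also have "\<dots> = (\<integral>x. dens_dev P0 P x * f x \<partial>P0) + (\<integral>x. f x \<partial>P0)"
    using sq_int_mult_integrable[OF u f] sq_int_integrable[OF FM f] by simp
  finally show ?thesis by (simp add: L2_inner_def)
qed

lemma eta_split:
  fixes c lam :: "nat \<Rightarrow> real"
  assumes lam: "\<And>k. lam k > 0" and s: "summable (\<lambda>k. (c k)\<^sup>2)"
  shows "summable (\<lambda>k. \<rho>\<^sup>2 / (lam k + \<rho>\<^sup>2) * (c k)\<^sup>2)"
    and "(\<Sum>k. lam k / (lam k + \<rho>\<^sup>2) * (c k)\<^sup>2) = (\<Sum>k. (c k)\<^sup>2) - (\<Sum>k. \<rho>\<^sup>2 / (lam k + \<rho>\<^sup>2) * (c k)\<^sup>2)"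
proof -
  have pos: "lam k + \<rho>\<^sup>2 > 0" for k using lam[of k] by (simp add: add_pos_nonneg)
  have le: "norm (\<rho>\<^sup>2 / (lam k + \<rho>\<^sup>2) * (c k)\<^sup>2) \<le> (c k)\<^sup>2" for k
  proof -
    have "\<rho>\<^sup>2 / (lam k + \<rho>\<^sup>2) \<le> 1" using pos[of k] lam[of k] by simp
    moreover have "0 \<le> \<rho>\<^sup>2 / (lam k + \<rho>\<^sup>2)" using pos[of k] by simp
    ultimately have "\<rho>\<^sup>2 / (lam k + \<rho>\<^sup>2) * (c k)\<^sup>2 \<le> (c k)\<^sup>2"
      by (intro mult_left_le_one_le) auto
    moreover have "0 \<le> \<rho>\<^sup>2 / (lam k + \<rho>\<^sup>2) * (c k)\<^sup>2" using pos[of k] by simp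
    ultimately show ?thesis unfolding real_norm_def by (simp only: abs_of_nonneg)
  qed
  show sw: "summable (\<lambda>k. \<rho>\<^sup>2 / (lam k + \<rho>\<^sup>2) * (c k)\<^sup>2)"
    by (rule summable_comparison_test'[OF s, of 0]) (rule le)
  have eq: "lam k / (lam k + \<rho>\<^sup>2) * (c k)\<^sup>2 = (c k)\<^sup>2 - \<rho>\<^sup>2 / (lam k + \<rho>\<^sup>2) * (c k)\<^sup>2" for k
    using pos[of k] by (simp add: field_simps)
  show "(\<Sum>k. lam k / (lam k + \<rho>\<^sup>2) * (c k)\<^sup>2) = (\<Sum>k. (c k)\<^sup>2) - (\<Sum>k. \<rho>\<^sup>2 / (lam k + \<rho>\<^sup>2) * (c k)\<^sup>2)"
    unfolding eq by (rule suminf_diff[OF s sw, symmetric])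
qed

lemma sqrt_le_sq: assumes "0 \<le> x" "sqrt x \<le> (y::real)" shows "x \<le> y\<^sup>2"
proof -
  have "(sqrt x)\<^sup>2 \<le> y\<^sup>2" by (rule power_mono[OF assms(2)]) (simp add: assms(1))
  then show ?thesis using assms(1) by simp
qed

lemma le_sqrt_sq: assumes "0 \<le> r" "r \<le> sqrt x" "0 \<le> (x::real)" shows "r\<^sup>2 \<le> x"
proof -
  have "r\<^sup>2 \<le> (sqrt x)\<^sup>2" by (rule power_mono[OF assms(2,1)])
  then show ?thesis using assms(3) by simp
qed

theorem mainTheorem9:
  fixes P0 P :: "'a measure" and phi :: "nat \<Rightarrow> 'a \<Rightarrow> real" and lam :: "nat \<Rightarrow> real"
    and Mc \<Delta> \<theta> \<rho> :: real
  assumes "prob_space P0"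
    and "mean_zero_ONB P0 phi"
    and "\<forall>k. lam k > 0"
    and "\<forall>k. lam (Suc k) < lam k"
    and "Mc > 0" and "\<Delta> > 0" and "\<theta> \<ge> 0"
    and "P_class P0 phi lam \<Delta> \<theta> Mc P"
  shows "(\<theta> = 0 \<and> 0 < \<rho> \<and> \<rho> \<le> sqrt (\<Delta> / (2 * Mc\<^sup>2)) \<longrightarrow>
            eta_sq phi lam \<rho> P \<ge> 1/2 * (L2_norm P0 (dens_dev P0 P))\<^sup>2 \<and>
            1/2 * (L2_norm P0 (dens_dev P0 P))\<^sup>2 \<ge> 1/2 * \<Delta>) \<and>
         (\<theta> > 0 \<and> 0 < \<rho> \<and>
            \<rho> \<le> 1 / (2 * sqrt 2) * (2 * Mc) powr (-\<theta>) * \<Delta> powr ((1 + \<theta>) / 2) \<longrightarrow>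
            eta_sq phi lam \<rho> P \<ge> 1/4 * (L2_norm P0 (dens_dev P0 P))\<^sup>2 \<and>
            1/4 * (L2_norm P0 (dens_dev P0 P))\<^sup>2 \<ge> 1/4 * \<Delta>)"
proof -
  note P0 = assms(1)
  have FM: "finite_measure P0" using P0 by (rule prob_space.finite_measure)
  define u where "u = dens_dev P0 P"
  have PP: "prob_space P" "sets P = sets P0" "absolutely_continuous P0 P"
    and Fc: "F_class P0 phi lam \<theta> Mc u" and Dle: "\<Delta> \<le> (L2_norm P0 u)\<^sup>2"
    using assms(8) unfolding P_class_def u_def by blast+
  have ON: "ON P0 phi" and mz: "\<And>k. (\<integral>x. phi k x \<partial>P0) = 0"
    and compl: "\<And>f. sq_int P0 f \<Longrightarrow> (\<integral>x. f x \<partial>P0) = 0 \<Longrightarrow> (\<forall>k. L2_inner P0 f (phi k) = 0) \<Longrightarrow> (AE x in P0. f x = 0)"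
  proof -
    have A: "(\<forall>k. sq_int P0 (phi k) \<and> (\<integral>x. phi k x \<partial>P0) = 0)"
      and B: "(\<forall>j k. L2_inner P0 (phi j) (phi k) = (if j = k then 1 else 0))"
      and C: "(\<forall>f. sq_int P0 f \<and> (\<integral>x. f x \<partial>P0) = 0 \<and> (\<forall>k. L2_inner P0 f (phi k) = 0)
          \<longrightarrow> (AE x in P0. f x = 0))"
      using assms(2) unfolding mean_zero_ONB_def by blast+
    show "ON P0 phi" unfolding ON_def using A B by blast
    show "\<And>k. (\<integral>x. phi k x \<partial>P0) = 0" using A by blast
    show "\<And>f. sq_int P0 f \<Longrightarrow> (\<integral>x. f x \<partial>P0) = 0 \<Longrightarrow> (\<forall>k. L2_inner P0 f (phi k) = 0) \<Longrightarrow> (AE x in P0. f x = 0)"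
      using C by blast
  qed
  have lam: "\<And>k. lam k > 0" using assms(3) by auto
  have u: "sq_int P0 u"
  proof (cases "\<theta> = 0")
    case True
    then have "in_RKHS P0 phi lam u" using Fc by (simp add: F_class_def)
    then show ?thesis by (simp add: in_RKHS_def)
  next
    case False
    then show ?thesis using Fc by (simp add: F_class_def)
  qed
  have u0: "(\<integral>x. u x \<partial>P0) = 0"
  proof -
    have "(\<integral>x. 1 \<partial>P) = L2_inner P0 u (\<lambda>x. 1) + (\<integral>x. 1 \<partial>P0)"
      unfolding u_def by (rule EP_coef[OF P0 PP u[unfolded u_def] sq_int_const[OF FM]])
    moreover have "(\<integral>x. 1 \<partial>P) = (1::real)" using PP(1) by (simp add: prob_space.prob_space)
    moreover have "(\<integral>x. 1 \<partial>P0) = (1::real)" using P0 by (simp add: prob_space.prob_space)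
    ultimately show ?thesis by (simp add: L2_inner_def)
  qed
  define c where "c k = L2_inner P0 u (phi k)" for k
  have cP: "(\<integral>x. phi k x \<partial>P) = c k" for k
    using EP_coef[OF P0 PP u[unfolded u_def] ON_sq[OF ON, of k]] mz[of k] by (simp add: c_def u_def)
  define U where "U = (\<integral>x. (u x)\<^sup>2 \<partial>P0)"
  have U_eq: "(L2_norm P0 u)\<^sup>2 = U"
    unfolding L2_norm_def U_def by (simp add: integral_nonneg_AE)
  have summ: "summable (\<lambda>k. (c k)\<^sup>2)" unfolding c_def by (rule bessel(1)[OF ON u])
  have SU: "U \<le> (\<Sum>k. (c k)\<^sup>2)" unfolding U_def c_def by (rule parseval_ge[OF P0 ON u u0 mz compl])
  define w where "w k = \<rho>\<^sup>2 / (lam k + \<rho>\<^sup>2) * (c k)\<^sup>2" for k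
  have sw: "summable w" unfolding w_def by (rule eta_split(1)[OF lam summ])
  have eta: "eta_sq phi lam \<rho> P = (\<Sum>k. (c k)\<^sup>2) - (\<Sum>k. w k)"
    unfolding eta_sq_def cP w_def by (rule eta_split(2)[OF lam summ])
  have pos: "lam k + \<rho>\<^sup>2 > 0" for k using lam[of k] by (simp add: add_pos_nonneg)
  have partA: "eta_sq phi lam \<rho> P \<ge> 1/2 * (L2_norm P0 u)\<^sup>2 \<and> 1/2 * (L2_norm P0 u)\<^sup>2 \<ge> 1/2 * \<Delta>"
    if h: "\<theta> = 0" "0 < \<rho>" "\<rho> \<le> sqrt (\<Delta> / (2 * Mc\<^sup>2))"
  proof -
    have rk: "in_RKHS P0 phi lam u" "RKHS_norm P0 phi lam u \<le> Mc"
      using Fc h(1) by (simp_all add: F_class_def)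
    have sr: "summable (\<lambda>k. (c k)\<^sup>2 / lam k)" using rk(1) by (simp add: in_RKHS_def c_def)
    have sr0: "0 \<le> (\<Sum>k. (c k)\<^sup>2 / lam k)" by (rule suminf_nonneg[OF sr]) (simp add: lam less_imp_le)
    have "sqrt (\<Sum>k. (c k)\<^sup>2 / lam k) \<le> Mc" using rk(2) by (simp add: RKHS_norm_def c_def)
    then have srM: "(\<Sum>k. (c k)\<^sup>2 / lam k) \<le> Mc\<^sup>2"
      by (rule sqrt_le_sq[OF sr0])
    have wle: "w k \<le> \<rho>\<^sup>2 * ((c k)\<^sup>2 / lam k)" for k
    proof -
      have "\<rho>\<^sup>2 / (lam k + \<rho>\<^sup>2) \<le> \<rho>\<^sup>2 / lam k"
        using lam[of k] pos[of k] by (intro divide_left_mono) (auto intro: mult_pos_pos)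
      then show ?thesis unfolding w_def using lam[of k]
        using mult_right_mono[OF \<open>\<rho>\<^sup>2 / (lam k + \<rho>\<^sup>2) \<le> \<rho>\<^sup>2 / lam k\<close>, of "(c k)\<^sup>2"] by simp
    qed
    have "(\<Sum>k. w k) \<le> (\<Sum>k. \<rho>\<^sup>2 * ((c k)\<^sup>2 / lam k))"
      by (rule suminf_le[OF wle sw summable_mult[OF sr]])
    also have "\<dots> = \<rho>\<^sup>2 * (\<Sum>k. (c k)\<^sup>2 / lam k)" by (rule suminf_mult[OF sr])
    also have "\<dots> \<le> \<rho>\<^sup>2 * Mc\<^sup>2" using srM by (intro mult_left_mono) auto
    also have "\<dots> \<le> \<Delta> / 2"
    proof -
      have "\<rho>\<^sup>2 \<le> \<Delta> / (2 * Mc\<^sup>2)"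
        using h(2,3) assms(5,6) by (intro le_sqrt_sq) auto
      then show ?thesis using assms(5) by (simp add: field_simps)
    qed
    finally have "(\<Sum>k. w k) \<le> \<Delta> / 2" .
    then show ?thesis using eta SU Dle U_eq by linarith
  qed
  have partB: "eta_sq phi lam \<rho> P \<ge> 1/4 * (L2_norm P0 u)\<^sup>2 \<and> 1/4 * (L2_norm P0 u)\<^sup>2 \<ge> 1/4 * \<Delta>"
    if h: "\<theta> > 0" "0 < \<rho>" "\<rho> \<le> 1 / (2 * sqrt 2) * (2 * Mc) powr (-\<theta>) * \<Delta> powr ((1 + \<theta>) / 2)"
  proof -
    define R where "R = (2*Mc) powr \<theta> * \<Delta> powr (-\<theta>/2)"
    have R: "R > 0" unfolding R_def using assms(5,6) by simp
    obtain g where g: "in_RKHS P0 phi lam g" "RKHS_norm P0 phi lam g \<le> R"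
      "L2_norm P0 (\<lambda>x. u x - g x) \<le> Mc * R powr (-1 / \<theta>)"
    proof -
      have "\<forall>R>0. \<exists>g. in_RKHS P0 phi lam g \<and> RKHS_norm P0 phi lam g \<le> R \<and>
                   L2_norm P0 (\<lambda>x. u x - g x) \<le> Mc * R powr (-1 / \<theta>)"
        using Fc h(1) by (simp add: F_class_def)
      then show ?thesis using R that by blast
    qed
    have sqg: "sq_int P0 g" using g(1) by (simp add: in_RKHS_def)
    define a where "a k = L2_inner P0 g (phi k)" for k
    define b where "b k = L2_inner P0 (\<lambda>x. u x - g x) (phi k)" for k
    have cab: "c k = a k + b k" for k
    proof -
      have "b k = (\<integral>x. u x * phi k x - g x * phi k x \<partial>P0)"
        unfolding b_def L2_inner_def by (simp add: left_diff_distrib)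
      also have "\<dots> = c k - a k"
        using sq_int_mult_integrable[OF u ON_sq[OF ON, of k]] sq_int_mult_integrable[OF sqg ON_sq[OF ON, of k]]
        by (simp add: c_def a_def L2_inner_def)
      finally show ?thesis by simp
    qed
    have sa: "summable (\<lambda>k. (a k)\<^sup>2 / lam k)" using g(1) by (simp add: in_RKHS_def a_def)
    have sa0: "0 \<le> (\<Sum>k. (a k)\<^sup>2 / lam k)" by (rule suminf_nonneg[OF sa]) (simp add: lam less_imp_le)
    have "sqrt (\<Sum>k. (a k)\<^sup>2 / lam k) \<le> R" using g(2) by (simp add: RKHS_norm_def a_def)
    then have saR: "(\<Sum>k. (a k)\<^sup>2 / lam k) \<le> R\<^sup>2"
      by (rule sqrt_le_sq[OF sa0])
    have sqd: "sq_int P0 (\<lambda>x. u x - g x)" by (rule sq_int_diff[OF u sqg])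
    have sb: "summable (\<lambda>k. (b k)\<^sup>2)" unfolding b_def by (rule bessel(1)[OF ON sqd])
    have sbI: "(\<Sum>k. (b k)\<^sup>2) \<le> (\<integral>x. (u x - g x)\<^sup>2 \<partial>P0)" unfolding b_def by (rule bessel(2)[OF ON sqd])
    have "L2_norm P0 (\<lambda>x. u x - g x) \<le> sqrt \<Delta> / 2"
      using g(3) R_calc1[OF assms(5,6) h(1)] unfolding R_def by simp
    then have "sqrt (\<integral>x. (u x - g x)\<^sup>2 \<partial>P0) \<le> sqrt \<Delta> / 2" by (simp add: L2_norm_def)
    moreover have I0: "0 \<le> (\<integral>x. (u x - g x)\<^sup>2 \<partial>P0)" by (rule integral_nonneg_AE) simp
    ultimately have "(\<integral>x. (u x - g x)\<^sup>2 \<partial>P0) \<le> (sqrt \<Delta> / 2)\<^sup>2"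
      using sqrt_le_sq by blast
    also have "\<dots> = \<Delta> / 4" using assms(6) by (simp add: power_divide)
    finally have sbD: "(\<Sum>k. (b k)\<^sup>2) \<le> \<Delta> / 4" using sbI by linarith
    have rR: "\<rho> * R \<le> sqrt \<Delta> / (2 * sqrt 2)"
    proof -
      have "\<rho> * R \<le> (1 / (2 * sqrt 2) * (2 * Mc) powr (-\<theta>) * \<Delta> powr ((1 + \<theta>) / 2)) * R"
        using h(3) R by (intro mult_right_mono) auto
      also have "\<dots> = 1 / (2 * sqrt 2) * ((2 * Mc) powr (-\<theta>) * \<Delta> powr ((1 + \<theta>) / 2) * R)"
        by simp
      also have "\<dots> = sqrt \<Delta> / (2 * sqrt 2)"
        unfolding R_def R_calc2[OF assms(5,6) h(1)] by simp
      finally show ?thesis .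
    qed
    have rR2: "\<rho>\<^sup>2 * R\<^sup>2 \<le> \<Delta> / 8"
    proof -
      have "(\<rho> * R)\<^sup>2 \<le> (sqrt \<Delta> / (2 * sqrt 2))\<^sup>2"
        using rR h(2) R by (intro power_mono) auto
      also have "\<dots> = \<Delta> / 8" using assms(6) by (simp add: power_divide power_mult_distrib)
      finally show ?thesis by (simp add: power_mult_distrib)
    qed
    have wle: "w k \<le> 2 * \<rho>\<^sup>2 * ((a k)\<^sup>2 / lam k) + 2 * (b k)\<^sup>2" for k
    proof -
      have q0: "0 \<le> \<rho>\<^sup>2 / (lam k + \<rho>\<^sup>2)" using pos[of k] by simp
      have q1: "\<rho>\<^sup>2 / (lam k + \<rho>\<^sup>2) \<le> \<rho>\<^sup>2 / lam k"
        using lam[of k] pos[of k] by (intro divide_left_mono) (auto intro: mult_pos_pos)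
      have q2: "\<rho>\<^sup>2 / (lam k + \<rho>\<^sup>2) \<le> 1" using pos[of k] lam[of k] by simp
      have cs: "(c k)\<^sup>2 \<le> 2 * (a k)\<^sup>2 + 2 * (b k)\<^sup>2"
        unfolding cab using sum_squares_bound[of "a k" "b k"] by (simp add: power2_sum)
      have "w k \<le> \<rho>\<^sup>2 / (lam k + \<rho>\<^sup>2) * (2 * (a k)\<^sup>2 + 2 * (b k)\<^sup>2)"
        unfolding w_def by (rule mult_left_mono[OF cs q0])
      also have "\<dots> = 2 * (\<rho>\<^sup>2 / (lam k + \<rho>\<^sup>2) * (a k)\<^sup>2) + 2 * (\<rho>\<^sup>2 / (lam k + \<rho>\<^sup>2) * (b k)\<^sup>2)"
        by (simp add: algebra_simps)
      also have "\<dots> \<le> 2 * (\<rho>\<^sup>2 / lam k * (a k)\<^sup>2) + 2 * (1 * (b k)\<^sup>2)"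
        using q1 q2 by (intro add_mono mult_left_mono mult_right_mono) auto
      also have "\<dots> = 2 * \<rho>\<^sup>2 * ((a k)\<^sup>2 / lam k) + 2 * (b k)\<^sup>2" by simp
      finally show ?thesis .
    qed
    have sA: "summable (\<lambda>k. 2 * \<rho>\<^sup>2 * ((a k)\<^sup>2 / lam k))" by (rule summable_mult[OF sa])
    have sB: "summable (\<lambda>k. 2 * (b k)\<^sup>2)" by (rule summable_mult[OF sb])
    have "(\<Sum>k. w k) \<le> (\<Sum>k. 2 * \<rho>\<^sup>2 * ((a k)\<^sup>2 / lam k) + 2 * (b k)\<^sup>2)"
      by (rule suminf_le[OF wle sw summable_add[OF sA sB]])
    also have "\<dots> = (\<Sum>k. 2 * \<rho>\<^sup>2 * ((a k)\<^sup>2 / lam k)) + (\<Sum>k. 2 * (b k)\<^sup>2)"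
      by (rule suminf_add[OF sA sB, symmetric])
    also have "(\<Sum>k. 2 * \<rho>\<^sup>2 * ((a k)\<^sup>2 / lam k)) = 2 * \<rho>\<^sup>2 * (\<Sum>k. (a k)\<^sup>2 / lam k)"
      by (rule suminf_mult[OF sa])
    also have "(\<Sum>k. 2 * (b k)\<^sup>2) = 2 * (\<Sum>k. (b k)\<^sup>2)"
      by (rule suminf_mult[OF sb])
    finally have wS: "(\<Sum>k. w k) \<le> 2 * \<rho>\<^sup>2 * (\<Sum>k. (a k)\<^sup>2 / lam k) + 2 * (\<Sum>k. (b k)\<^sup>2)" .
    have "2 * \<rho>\<^sup>2 * (\<Sum>k. (a k)\<^sup>2 / lam k) \<le> 2 * \<rho>\<^sup>2 * R\<^sup>2"
      using saR by (intro mult_left_mono) auto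
    then have "(\<Sum>k. w k) \<le> 3/4 * \<Delta>" using wS rR2 sbD by linarith
    then show ?thesis using eta SU Dle U_eq by linarith
  qed
  show ?thesis using partA partB unfolding u_def by blast
qed

end
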